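(* For all nonnegative integers $k$, $n$, and $r$, \[ \sum_{i=0}^k\binom{(r+1)i+n}{i} \;=\; \sum_{\alpha \in \mathcal{C}(k, r)} (-1)^{|\alpha|-\ell(\alpha)} \Biggl(\prod_{j=1}^{\ell(\alpha)}\binom{r}{\alpha_j-1}\Biggr)\binom{(r+1)k+n+1-|\alpha|+\ell(\alpha)}{k-|\alpha|}. \]
   Context: A composition $\alpha=(\alpha_1,\dots,\alpha_j)$ of an integer $m\ge 0$ is a finite sequence of positive integers summing to $m$; the empty composition $()$ is the unique composition of $0$. Write $|\alpha|$ for the sum of the parts and $\ell(\alpha)$ for the number of parts. For integers $m\ge 0$ and $r \geq 0$, let $c(m,r)$ be the set of compositions $\alpha$ of $m$ with $2\le \alpha_i\le r+1$ for all $1 \leq i \leq \ell(\alpha)$, and let $\mathcal{C}(k,r)=\bigcup_{m=0}^k c(m,r)$. The empty product equals $1$. *)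

theory Defs
  imports Main
begin

definition comp_c :: "nat \<Rightarrow> nat \<Rightarrow> nat list set" where
  "comp_c m r = {\<alpha>. sum_list \<alpha> = m \<and> (\<forall>a\<in>set \<alpha>. 2 \<le> a \<and> a \<le> r + 1)}"

definition comp_C :: "nat \<Rightarrow> nat \<Rightarrow> nat list set" where
  "comp_C k r = (\<Union>m\<in>{0..k}. comp_c m r)"

end

theory Submission
  imports Defs
begin

lemma lemB:
  "(\<Sum>j\<le>t. (-1::int)^j * int (r choose j) * int ((M + r - j) choose (t - j))) = int (M choose t)"
proof (induction r arbitrary: M t)
  case 0
  have "(\<Sum>j\<le>t. (-1::int)^j * int (0 choose j) * int ((M + 0 - j) choose (t - j)))
     = (\<Sum>j\<le>t. if j = 0 then int (M choose t) else 0)"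
    by (rule sum.cong) auto
  then show ?case by simp
next
  case (Suc r)
  show ?case
  proof (cases t)
    case 0
    then show ?thesis by simp
  next
    case (Suc s)
    have A: "int (Suc (M + r) choose Suc s) +
      (\<Sum>j\<le>s. (-1::int)^(Suc j) * int (r choose Suc j) * int ((M + r - j) choose (s - j))) = int (Suc M choose Suc s)"
      using Suc.IH[of "Suc M" "Suc s", unfolded sum.atMost_Suc_shift] by (simp del: binomial_Suc_Suc)
    have B: "(\<Sum>j\<le>s. (-1::int)^j * int (r choose j) * int ((M + r - j) choose (s - j))) = int (M choose s)"
      using Suc.IH[of M s] by simp
    have pas: "\<And>i. int (Suc r choose Suc i) = int (r choose i) + int (r choose Suc i)" by simp
    have "(\<Sum>j\<le>t. (-1::int)^j * int (Suc r choose j) * int ((M + Suc r - j) choose (t - j)))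
      = int (Suc (M + r) choose Suc s) +
        (\<Sum>j\<le>s. (-1::int)^(Suc j) * int (r choose Suc j) * int ((M + r - j) choose (s - j)))
        - (\<Sum>j\<le>s. (-1::int)^j * int (r choose j) * int ((M + r - j) choose (s - j)))"
      unfolding Suc sum.atMost_Suc_shift
      by (simp add: pas sum.distrib sum_subtractf sum_negf algebra_simps del: binomial_Suc_Suc)
    also have "\<dots> = int (Suc M choose Suc s) - int (M choose s)" using A B by simp
    also have "\<dots> = int (M choose t)" using Suc by simp
    finally show ?thesis .
  qed
qed

lemma comp_C_char: "comp_C k r = {\<alpha>. sum_list \<alpha> \<le> k \<and> (\<forall>a\<in>set \<alpha>. 2 \<le> a \<and> a \<le> r + 1)}"
  unfolding comp_C_def comp_c_def by auto

lemma len_le_sum: "\<forall>a\<in>set xs. 2 \<le> a \<Longrightarrow> 2 * length xs \<le> sum_list (xs::nat list)"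
  by (induction xs) auto

lemma comp_C_finite: "finite (comp_C k r)"
proof -
  have "comp_C k r \<subseteq> {xs. set xs \<subseteq> {0..k} \<and> length xs \<le> k}"
  proof
    fix xs assume "xs \<in> comp_C k r"
    then have h: "sum_list xs \<le> k" "\<forall>a\<in>set xs. 2 \<le> a" by (auto simp: comp_C_char)
    have "set xs \<subseteq> {0..k}" using h(1) member_le_sum_list[of _ xs] by fastforce
    moreover have "length xs \<le> k" using len_le_sum[OF h(2)] h(1) by linarith
    ultimately show "xs \<in> {xs. set xs \<subseteq> {0..k} \<and> length xs \<le> k}" by simp
  qed
  then show ?thesis by (rule finite_subset) (rule finite_lists_length_le, simp)
qed

definition J :: "nat \<Rightarrow> nat \<Rightarrow> nat set" where
  "J k r = {j. 1 \<le> j \<and> j < k \<and> j \<le> r}"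

lemma comp_C_decomp:
  "comp_C k r = insert [] (\<Union>j\<in>J k r. Cons (Suc j) ` comp_C (k - Suc j) r)"
proof (rule set_eqI)
  fix xs show "xs \<in> comp_C k r \<longleftrightarrow> xs \<in> insert [] (\<Union>j\<in>J k r. Cons (Suc j) ` comp_C (k - Suc j) r)"
  proof (cases xs)
    case Nil then show ?thesis by (simp add: comp_C_char)
  next
    case (Cons a ys)
    show ?thesis
    proof
      assume "xs \<in> comp_C k r"
      then have h: "a + sum_list ys \<le> k" "2 \<le> a" "a \<le> r+1" "\<forall>b\<in>set ys. 2 \<le> b \<and> b \<le> r + 1"
        using Cons by (auto simp: comp_C_char)
      have "a - 1 \<in> J k r" using h by (auto simp: J_def)
      moreover have "ys \<in> comp_C (k - Suc (a-1)) r" using h by (auto simp: comp_C_char)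
      ultimately show "xs \<in> insert [] (\<Union>j\<in>J k r. Cons (Suc j) ` comp_C (k - Suc j) r)"
        using Cons h by (intro insertI2 UN_I[of "a-1"]) auto
    next
      assume "xs \<in> insert [] (\<Union>j\<in>J k r. Cons (Suc j) ` comp_C (k - Suc j) r)"
      then show "xs \<in> comp_C k r" using Cons by (auto simp: comp_C_char J_def)
    qed
  qed
qed

definition T :: "nat \<Rightarrow> nat \<Rightarrow> nat \<Rightarrow> nat list \<Rightarrow> int" where
  "T r k M \<alpha> = (-1::int) ^ (sum_list \<alpha> - length \<alpha>)
       * (\<Prod>j<length \<alpha>. int (r choose (\<alpha> ! j - 1)))
       * int ((M - sum_list \<alpha> + length \<alpha>) choose (k - sum_list \<alpha>))"

definition G :: "nat \<Rightarrow> nat \<Rightarrow> nat \<Rightarrow> int" where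
  "G r k M = (\<Sum>\<alpha>\<in>comp_C k r. T r k M \<alpha>)"

lemma T_Cons:
  assumes "ys \<in> comp_C (k - Suc j) r" "j < k" "k \<le> M"
  shows "T r k M (Suc j # ys) = (-1)^j * int (r choose j) * T r (k - Suc j) (M - j) ys"
proof -
  have h: "sum_list ys \<le> k - Suc j" "\<forall>b\<in>set ys. 2 \<le> b" using assms(1) by (auto simp: comp_C_char)
  have l: "2 * length ys \<le> sum_list ys" using len_le_sum[OF h(2)] .
  have e1: "sum_list (Suc j # ys) - length (Suc j # ys) = j + (sum_list ys - length ys)" using l by simp
  have e2: "M - sum_list (Suc j # ys) + length (Suc j # ys) = M - j - sum_list ys + length ys"
    using h(1) assms by simp
  have e3: "k - sum_list (Suc j # ys) = k - Suc j - sum_list ys" by simp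
  have p: "(\<Prod>i<length (Suc j # ys). int (r choose ((Suc j # ys) ! i - 1)))
     = int (r choose j) * (\<Prod>i<length ys. int (r choose (ys ! i - 1)))"
    by (simp only: length_Cons prod.lessThan_Suc_shift) simp
  show ?thesis unfolding T_def e1 e2 e3 p by (simp add: power_add algebra_simps)
qed

lemma G_decomp:
  assumes "k \<le> M"
  shows "G r k M = int (M choose k) + (\<Sum>j\<in>{1..<k}. (-1)^j * int (r choose j) * G r (k - Suc j) (M - j))"
proof -
  have fin: "finite (J k r)" by (simp add: J_def)
  have nin: "[] \<notin> (\<Union>j\<in>J k r. Cons (Suc j) ` comp_C (k - Suc j) r)" by auto
  have "G r k M = T r k M [] + (\<Sum>xs\<in>(\<Union>j\<in>J k r. Cons (Suc j) ` comp_C (k - Suc j) r). T r k M xs)"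
    unfolding G_def comp_C_decomp[of k r]
    by (rule sum.insert) (use fin comp_C_finite nin in auto)
  also have "(\<Sum>xs\<in>(\<Union>j\<in>J k r. Cons (Suc j) ` comp_C (k - Suc j) r). T r k M xs)
     = (\<Sum>j\<in>J k r. \<Sum>xs\<in>Cons (Suc j) ` comp_C (k - Suc j) r. T r k M xs)"
    by (rule sum.UNION_disjoint) (use fin comp_C_finite in auto)
  also have "\<dots> = (\<Sum>j\<in>J k r. (-1)^j * int (r choose j) * G r (k - Suc j) (M - j))"
  proof (rule sum.cong[OF refl])
    fix j assume j: "j \<in> J k r"
    have "(\<Sum>xs\<in>Cons (Suc j) ` comp_C (k - Suc j) r. T r k M xs) = (\<Sum>ys\<in>comp_C (k - Suc j) r. T r k M (Suc j # ys))"
      by (subst sum.reindex) (auto simp: inj_on_def)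
    also have "\<dots> = (\<Sum>ys\<in>comp_C (k - Suc j) r. (-1)^j * int (r choose j) * T r (k - Suc j) (M - j) ys)"
      by (rule sum.cong[OF refl], rule T_Cons) (use j assms in \<open>auto simp: J_def\<close>)
    finally show "(\<Sum>xs\<in>Cons (Suc j) ` comp_C (k - Suc j) r. T r k M xs) = (-1)^j * int (r choose j) * G r (k - Suc j) (M - j)"
      by (simp add: G_def sum_distrib_left)
  qed
  also have "\<dots> = (\<Sum>j\<in>{1..<k}. (-1)^j * int (r choose j) * G r (k - Suc j) (M - j))"
    by (rule sum.mono_neutral_left) (auto simp: J_def)
  finally show ?thesis by (simp add: T_def)
qed


lemma G0: "G r 0 M = 1"
  using G_decomp[of 0 M r] by simp

lemma lemB_split:
  assumes "1 \<le> t" "t \<le> M"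
  shows "int ((M + r) choose t) + (\<Sum>j\<in>{1..<t}. (-1::int)^j * int (r choose j) * int ((M - j + r) choose (t - j)))
    + (-1)^t * int (r choose t) = int (M choose t)"
proof -
  let ?f = "\<lambda>j. (-1::int)^j * int (r choose j) * int ((M + r - j) choose (t - j))"
  have st: "{..t} = insert 0 (insert t {1..<t})" using assms by auto
  have "(\<Sum>j\<le>t. ?f j) = ?f 0 + (?f t + (\<Sum>j\<in>{1..<t}. ?f j))"
    unfolding st using assms by (simp add: sum.insert)
  moreover have "(\<Sum>j\<in>{1..<t}. ?f j) = (\<Sum>j\<in>{1..<t}. (-1::int)^j * int (r choose j) * int ((M - j + r) choose (t - j)))"
    by (rule sum.cong) (use assms in auto)
  ultimately show ?thesis using lemB[where t=t and r=r and M=M] by simp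
qed

lemma key:
  "t \<le> M \<Longrightarrow> G r (Suc t) (M + r + 1) = G r t M + int ((M + r) choose Suc t)"
proof (induction t arbitrary: M rule: less_induct)
  case (less t)
  have L: "G r (Suc t) (M + r + 1) = int ((M + r + 1) choose Suc t)
     + (\<Sum>j\<in>{1..<Suc t}. (-1)^j * int (r choose j) * G r (t - j) (M + r + 1 - j))"
    using G_decomp[of "Suc t" "M + r + 1" r] less.prems by simp
  show ?case
  proof (cases "t = 0")
    case True
    then show ?thesis using L by (simp add: G0)
  next
    case False
    then have t1: "1 \<le> t" by simp
    have S: "(\<Sum>j\<in>{1..<Suc t}. (-1)^j * int (r choose j) * G r (t - j) (M + r + 1 - j))
      = (\<Sum>j\<in>{1..<t}. (-1)^j * int (r choose j) * G r (t - j) (M + r + 1 - j)) + (-1)^t * int (r choose t)"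
      using t1 by (simp add: G0)
    have I: "(\<Sum>j\<in>{1..<t}. (-1)^j * int (r choose j) * G r (t - j) (M + r + 1 - j))
      = (\<Sum>j\<in>{1..<t}. (-1)^j * int (r choose j) * G r (t - Suc j) (M - j))
        + (\<Sum>j\<in>{1..<t}. (-1::int)^j * int (r choose j) * int ((M - j + r) choose (t - j)))"
      unfolding sum.distrib[symmetric]
    proof (rule sum.cong[OF refl])
      fix j assume j: "j \<in> {1..<t}"
      have "G r (Suc (t - Suc j)) ((M - j) + r + 1) = G r (t - Suc j) (M - j) + int ((M - j + r) choose Suc (t - Suc j))"
        using j less.prems by (intro less.IH) auto
      moreover have "Suc (t - Suc j) = t - j" "(M - j) + r + 1 = M + r + 1 - j" using j less.prems by auto
      ultimately have "G r (t - j) (M + r + 1 - j) = G r (t - Suc j) (M - j) + int ((M - j + r) choose (t - j))"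
        by (simp only:)
      then show "(-1)^j * int (r choose j) * G r (t - j) (M + r + 1 - j) =
         (-1)^j * int (r choose j) * G r (t - Suc j) (M - j) + (-1::int)^j * int (r choose j) * int ((M - j + r) choose (t - j))"
        by (simp add: algebra_simps)
    qed
    have R: "G r t M = int (M choose t) + (\<Sum>j\<in>{1..<t}. (-1)^j * int (r choose j) * G r (t - Suc j) (M - j))"
      using G_decomp[of t M r] less.prems by simp
    have P: "int ((M + r + 1) choose Suc t) = int ((M + r) choose t) + int ((M + r) choose Suc t)" by simp
    show ?thesis using L S I R P lemB_split[OF t1 less.prems, of r] by simp
  qed
qed

theorem corollary3p2:
  fixes k n r :: nat
  shows "(\<Sum>i=0..k. int (((r+1)*i + n) choose i)) =
    (\<Sum>\<alpha>\<in>comp_C k r.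
       (-1::int) ^ (sum_list \<alpha> - length \<alpha>)
       * (\<Prod>j<length \<alpha>. int (r choose (\<alpha> ! j - 1)))
       * int (((r+1)*k + n + 1 - sum_list \<alpha> + length \<alpha>) choose (k - sum_list \<alpha>)))"
proof -
  have "(\<Sum>i=0..k. int (((r+1)*i + n) choose i)) = G r k ((r+1)*k + n + 1)"
  proof (induction k)
    case 0
    then show ?case by (simp add: G0)
  next
    case (Suc k)
    have e: "((r+1)*k + n + 1) + r + 1 = (r+1) * Suc k + n + 1" "(r+1)*k + n + 1 + r = (r+1) * Suc k + n" by simp_all
    have K: "G r (Suc k) ((r+1) * Suc k + n + 1) = G r k ((r+1)*k + n + 1) + int (((r+1) * Suc k + n) choose Suc k)"
      using key[of k "(r+1)*k + n + 1" r, unfolded e] by simp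
    show ?case unfolding sum.atLeast0_atMost_Suc Suc.IH K ..
  qed
  then show ?thesis by (simp add: G_def T_def)
qed

end
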